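(* Let $k$ be a positive integer and $\underline{\zeta}\in\mathbb{R}^k$ arbitrary. Then \[ \widehat{\lambda}_{k,1}(\underline{\zeta})=\frac{1}{k}\quad\Longleftrightarrow\quad \lambda_{k,2}(\underline{\zeta})\geq\lambda_{k,3}(\underline{\zeta})\geq\cdots\geq\lambda_{k,k+1}(\underline{\zeta})=\frac{1}{k}. \]
   Context: For $\underline{\zeta}=(\zeta_1,\ldots,\zeta_k)\in\mathbb{R}^k$ and $1\leq j\leq k+1$, $\lambda_{k,j}(\underline{\zeta})$ (resp. $\widehat{\lambda}_{k,j}(\underline{\zeta})$) is the supremum of all $\eta\in\mathbb{R}$ such that the system $|x|\leq X$, $\max_{1\leq i\leq k}|\zeta_i x-y_i|\leq X^{-\eta}$ has at least $j$ linearly independent solutions $(x,y_1,\ldots,y_k)\in\mathbb{Z}^{k+1}$ for arbitrarily large real $X$ (resp. for all sufficiently large real $X$). *)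

theory Defs
  imports "HOL-Analysis.Analysis"
begin

text \<open>Vectors in Z^(k+1) are represented as functions nat => int, where
  component 0 is x and component i (1 <= i <= k) is y_i.
  zeta :: nat => real uses components 1..k.\<close>

definition lin_indep_int :: "nat \<Rightarrow> nat \<Rightarrow> (nat \<Rightarrow> nat \<Rightarrow> int) \<Rightarrow> bool" where
  "lin_indep_int k j v \<longleftrightarrow>
     (\<forall>c :: nat \<Rightarrow> real.
        (\<forall>i\<le>k. (\<Sum>l<j. c l * of_int (v l i)) = 0) \<longrightarrow> (\<forall>l<j. c l = 0))"

definition has_indep_sols :: "nat \<Rightarrow> nat \<Rightarrow> (nat \<Rightarrow> real) \<Rightarrow> real \<Rightarrow> real \<Rightarrow> bool" where
  "has_indep_sols k j zeta eta X \<longleftrightarrow>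
     (\<exists>v :: nat \<Rightarrow> nat \<Rightarrow> int. lin_indep_int k j v \<and>
        (\<forall>l<j. \<bar>real_of_int (v l 0)\<bar> \<le> X \<and>
               (\<forall>i\<in>{1..k}. \<bar>zeta i * of_int (v l 0) - of_int (v l i)\<bar> \<le> X powr (-eta))))"

definition lambda_exp :: "nat \<Rightarrow> nat \<Rightarrow> (nat \<Rightarrow> real) \<Rightarrow> ereal" where
  "lambda_exp k j zeta =
     Sup {ereal eta | eta. \<forall>X0. \<exists>X\<ge>X0. has_indep_sols k j zeta eta X}"

definition hat_lambda_exp :: "nat \<Rightarrow> nat \<Rightarrow> (nat \<Rightarrow> real) \<Rightarrow> ereal" where
  "hat_lambda_exp k j zeta =
     Sup {ereal eta | eta. \<exists>X0. \<forall>X\<ge>X0. has_indep_sols k j zeta eta X}"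

end

theory Submission
  imports Defs "Jordan_Normal_Form.Determinant"
begin

lemma lin_indep_det:
  assumes "lin_indep_int k (k+1) v"
  shows "det (mat (k+1) (k+1) (\<lambda>(r,c). real_of_int (v r c))) \<noteq> 0"
proof
  let ?M = "mat (k+1) (k+1) (\<lambda>(r,c). real_of_int (v r c))"
  assume "det ?M = 0"
  hence "det (transpose_mat ?M) = 0" by (subst det_transpose[of _ "k+1"]) auto
  then obtain c where c: "c \<in> carrier_vec (k+1)" "c \<noteq> 0\<^sub>v (k+1)" "transpose_mat ?M *\<^sub>v c = 0\<^sub>v (k+1)"
    using det_0_iff_vec_prod_zero[of "transpose_mat ?M" "k+1"] by auto
  have "\<forall>i\<le>k. (\<Sum>l<k+1. (c $ l) * of_int (v l i)) = 0"
  proof (intro allI impI)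
    fix i assume i: "i \<le> k"
    have "(transpose_mat ?M *\<^sub>v c) $ i = 0" using c(3) i by simp
    thus "(\<Sum>l<k+1. (c $ l) * of_int (v l i)) = 0"
      using i c(1) by (simp add: scalar_prod_def lessThan_atLeast0 mult.commute)
  qed
  hence "\<forall>l<k+1. c $ l = 0" using assms unfolding lin_indep_int_def by blast
  hence "c = 0\<^sub>v (k+1)" using c(1) by (intro eq_vecI) auto
  thus False using c(2) by simp
qed

lemma det_bound:
  fixes v :: "nat \<Rightarrow> nat \<Rightarrow> int" and P Q :: "nat \<Rightarrow> real" and zeta :: "nat \<Rightarrow> real"
  assumes indep: "lin_indep_int k (k+1) v" and k: "k \<ge> 1"
  and P: "\<forall>r\<le>k. \<bar>real_of_int (v r 0)\<bar> \<le> P r"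
  and Q: "\<forall>r\<le>k. \<forall>i\<in>{1..k}. \<bar>zeta i * of_int (v r 0) - of_int (v r i)\<bar> \<le> Q r"
  shows "1 \<le> fact (k+1) * (\<Sum>r\<le>k. P r * (\<Prod>r'\<in>{..k}-{r}. Q r'))"
proof -
  define n where "n = k + 1"
  define M where "M = mat n n (\<lambda>(r,c). real_of_int (v r c))"
  define E :: "real mat" where "E = mat n n (\<lambda>(i,c). (if i = 0 then (if c = 0 then 1 else zeta c) else 0)
       + (if i = c \<and> c \<noteq> 0 then -1 else 0))"
  have Mc: "M \<in> carrier_mat n n" and Ec: "E \<in> carrier_mat n n" unfolding M_def E_def by auto
  have detM: "det M \<noteq> 0" using lin_indep_det[OF indep] unfolding M_def n_def by simp
  have "det M \<in> \<int>" unfolding det_def'[OF Mc]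
    by (intro Ints_sum Ints_mult Ints_prod) (auto simp: M_def sign_def)
  hence detM1: "1 \<le> \<bar>det M\<bar>" using detM Ints_nonzero_abs_ge1 by blast
  have ut: "upper_triangular E" unfolding upper_triangular_def E_def by auto
  have ul: "[0..<k+1] = 0 # [1..<k+1]" by (simp add: upt_rec)
  have "diag_mat E = map (\<lambda>i. E $$ (i,i)) [0..<k+1]" unfolding diag_mat_def E_def n_def by simp
  also have "\<dots> = E $$ (0,0) # map (\<lambda>i. E $$ (i,i)) [1..<k+1]" unfolding ul by simp
  also have "\<dots> = 1 # map (\<lambda>i. -1) [1..<k+1]"
    by (intro arg_cong2[where f = Cons] map_cong) (auto simp: E_def n_def)
  finally have "det E = prod_list (1 # map (\<lambda>i. -1) [1..<k+1])"
    using det_upper_triangular[OF ut Ec] by simp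
  hence detE: "\<bar>det E\<bar> = 1" by (simp add: map_replicate_const)
  define M' where "M' = M * E"
  have M'c: "M' \<in> carrier_mat n n" unfolding M'_def using Mc Ec by auto
  have detM': "1 \<le> \<bar>det M'\<bar>" unfolding M'_def det_mult[OF Mc Ec] using detM1 detE by (simp add: abs_mult)
  have M'e: "M' $$ (r,c) = (if c = 0 then real_of_int (v r 0) else zeta c * of_int (v r 0) - of_int (v r c))"
    if "r < n" "c < n" for r c
  proof -
    have "M' $$ (r,c) = (\<Sum>i\<in>{0..<n}. real_of_int (v r i) * E $$ (i,c))"
      using that Ec unfolding M'_def M_def by (auto simp: scalar_prod_def row_def col_def)
    also have "\<dots> = real_of_int (v r 0) * E $$ (0,c) + (\<Sum>i\<in>{Suc 0..<n}. real_of_int (v r i) * E $$ (i,c))"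
      using that by (subst sum.atLeast_Suc_lessThan) auto
    also have "(\<Sum>i\<in>{Suc 0..<n}. real_of_int (v r i) * E $$ (i,c)) =
        (\<Sum>i\<in>{Suc 0..<n}. (if i = c then - real_of_int (v r c) else 0))"
      by (rule sum.cong[OF refl]) (use that in \<open>auto simp: E_def\<close>)
    also have "\<dots> = (if c \<in> {Suc 0..<n} then - real_of_int (v r c) else 0)"
      by (simp add: sum.delta)
    finally show ?thesis using that by (auto simp: E_def)
  qed
  define bd :: "nat \<Rightarrow> nat \<Rightarrow> real" where "bd = (\<lambda>i c. if c = 0 then P i else Q i)"
  define B where "B = (\<Sum>r\<le>k. P r * (\<Prod>r'\<in>{..k}-{r}. Q r'))"
  have Pnn: "0 \<le> P r" if "r \<le> k" for r using P that by (meson abs_ge_zero order_trans)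
  have Qnn: "0 \<le> Q r" if "r \<le> k" for r using Q that k by (meson abs_ge_zero order_trans atLeastAtMost_iff order_refl)
  have tmb: "\<bar>signof p * (\<Prod>i = 0..<n. M' $$ (i, p i))\<bar> \<le> B" if p: "p permutes {0..<n}" for p
  proof -
    have pin: "p i < n" if "i < n" for i using p that by (simp add: permutes_in_image)
    have "\<bar>signof p * (\<Prod>i = 0..<n. M' $$ (i, p i))\<bar> = (\<Prod>i = 0..<n. \<bar>M' $$ (i, p i)\<bar>)"
      by (simp add: abs_mult abs_prod sign_def)
    also have "\<dots> \<le> (\<Prod>i = 0..<n. bd i (p i))"
    proof (rule prod_mono)
      fix i assume i: "i \<in> {0..<n}"
      hence "i \<le> k" "p i < n" using pin n_def by auto
      thus "0 \<le> \<bar>M' $$ (i, p i)\<bar> \<and> \<bar>M' $$ (i, p i)\<bar> \<le> bd i (p i)"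
        using i M'e[of i "p i"] P Q unfolding bd_def n_def by auto
    qed
    also obtain r0 where r0: "r0 < n" "p r0 = 0"
    proof -
      have "bij_betw p {0..<n} {0..<n}" using p permutes_imp_bij by blast
      then obtain r0 where "r0 \<in> {0..<n}" "p r0 = 0" unfolding n_def
        by (metis atLeastLessThan_iff bij_betw_iff_bijections le0 zero_less_Suc Suc_eq_plus1)
      thus ?thesis using that by auto
    qed
    have "(\<Prod>i = 0..<n. bd i (p i)) = bd r0 (p r0) * (\<Prod>i\<in>{0..<n}-{r0}. bd i (p i))"
      using r0 by (simp add: prod.remove)
    also have "\<dots> = P r0 * (\<Prod>i\<in>{..k}-{r0}. Q i)"
    proof -
      have "(\<Prod>i\<in>{0..<n}-{r0}. bd i (p i)) = (\<Prod>i\<in>{0..<n}-{r0}. Q i)"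
      proof (rule prod.cong[OF refl])
        fix i assume "i \<in> {0..<n}-{r0}"
        hence "p i \<noteq> p r0" using p r0 by (metis Diff_iff atLeastLessThan_iff insertI1 permutes_inj inj_eq)
        thus "bd i (p i) = Q i" using r0 unfolding bd_def by simp
      qed
      moreover have "{0..<n} = {..k}" unfolding n_def by auto
      ultimately show ?thesis using r0 unfolding bd_def by simp
    qed
    also have "\<dots> \<le> B" unfolding B_def
      by (rule member_le_sum[where f = "\<lambda>r. P r * (\<Prod>r'\<in>{..k}-{r}. Q r')"])
         (use r0 n_def Pnn Qnn in \<open>auto intro!: mult_nonneg_nonneg prod_nonneg\<close>)
    finally show ?thesis .
  qed
  have "\<bar>det M'\<bar> \<le> (\<Sum>p\<in>{p. p permutes {0..<n}}. \<bar>signof p * (\<Prod>i = 0..<n. M' $$ (i, p i))\<bar>)"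
    unfolding det_def'[OF M'c] by (rule sum_abs)
  also have "\<dots> \<le> (\<Sum>p\<in>{p. p permutes {0..<n}}. B)" by (rule sum_mono) (use tmb in auto)
  also have "\<dots> = fact n * B" using card_permutations[of "{0..<n}" n] by simp
  finally show ?thesis using detM' unfolding B_def n_def by simp
qed

lemma indep_mono:
  assumes "has_indep_sols k (j+1) zeta eta X"
  shows "has_indep_sols k j zeta eta X"
proof -
  obtain v where v: "lin_indep_int k (j+1) v"
    "\<forall>l<j+1. \<bar>real_of_int (v l 0)\<bar> \<le> X \<and>
       (\<forall>i\<in>{1..k}. \<bar>zeta i * of_int (v l 0) - of_int (v l i)\<bar> \<le> X powr (-eta))"
    using assms unfolding has_indep_sols_def by blast
  have "lin_indep_int k j v" unfolding lin_indep_int_def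
  proof (intro allI impI)
    fix c :: "nat \<Rightarrow> real" and l :: nat
    assume h: "\<forall>i\<le>k. (\<Sum>l<j. c l * of_int (v l i)) = 0" and l: "l < j"
    define c' where "c' = (\<lambda>l. if l < j then c l else 0)"
    have "\<forall>i\<le>k. (\<Sum>l<j+1. c' l * of_int (v l i)) = 0"
      using h by (simp add: c'_def)
    hence "\<forall>l<j+1. c' l = 0" using v(1) unfolding lin_indep_int_def by blast
    hence "c' l = 0" using l by simp
    thus "c l = 0" using l by (simp add: c'_def)
  qed
  thus ?thesis unfolding has_indep_sols_def using v(2) by auto
qed

lemma indep1_nonzero:
  assumes "lin_indep_int k 1 v"
  shows "\<exists>i\<le>k. v 0 i \<noteq> 0"
proof (rule ccontr)
  assume "\<not> ?thesis"
  hence "\<forall>i\<le>k. (\<Sum>l<1. (\<lambda>_. 1::real) l * of_int (v l i)) = 0" by simp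
  hence "\<forall>l<1. (\<lambda>_. 1::real) l = 0"
    using assms[unfolded lin_indep_int_def, THEN spec[of _ "\<lambda>_. 1::real"]] by blast
  hence "(\<lambda>_. 1::real) 0 = 0" by blast
  thus False by simp
qed

lemma nonzero_indep1:
  assumes "\<exists>i\<le>k. v 0 i \<noteq> 0"
  shows "lin_indep_int k 1 v"
  unfolding lin_indep_int_def
proof (intro allI impI)
  fix c :: "nat \<Rightarrow> real" and l :: nat
  assume h: "\<forall>i\<le>k. (\<Sum>l<1. c l * of_int (v l i)) = 0" and l: "l < 1"
  obtain i where "i \<le> k" "v 0 i \<noteq> 0" using assms by blast
  have h0: "c 0 * of_int (v 0 i) = 0" using h \<open>i \<le> k\<close> by simp
  have "c 0 = 0" using h0 \<open>v 0 i \<noteq> 0\<close> by simp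
  thus "c l = 0" using l by simp
qed

lemma exch_rep:
  assumes indep: "lin_indep_int k (k+1) v" and j: "j \<le> k"
    and dep: "\<not> lin_indep_int k (k+1) (v(j:=w))"
  shows "\<exists>\<alpha>. \<alpha> j = 0 \<and> (\<forall>i\<le>k. real_of_int (w i) = (\<Sum>l<k+1. \<alpha> l * of_int (v l i)))"
proof -
  obtain c :: "nat \<Rightarrow> real" and l0 where c: "\<forall>i\<le>k. (\<Sum>l<k+1. c l * of_int ((v(j:=w)) l i)) = 0" and l0: "l0 < k+1" "c l0 \<noteq> 0"
    using dep unfolding lin_indep_int_def by blast
  have split: "(\<Sum>l<k+1. c l * of_int ((v(j:=w)) l i)) = c j * of_int (w i) + (\<Sum>l\<in>{..<k+1}-{j}. c l * of_int (v l i))" for i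
    using j by (subst sum.remove[of _ j]) (auto intro!: sum.cong)
  have cj: "c j \<noteq> 0"
  proof
    assume cj0: "c j = 0"
    have "\<forall>i\<le>k. (\<Sum>l<k+1. c l * of_int (v l i)) = 0"
    proof (intro allI impI)
      fix i assume "i \<le> k"
      have "(\<Sum>l<k+1. c l * of_int (v l i)) = c j * of_int (v j i) + (\<Sum>l\<in>{..<k+1}-{j}. c l * of_int (v l i))"
        using j by (subst sum.remove[of _ j]) (auto intro!: sum.cong)
      also have "\<dots> = (\<Sum>l<k+1. c l * of_int ((v(j:=w)) l i))" using split[of i] cj0 by simp
      finally show "(\<Sum>l<k+1. c l * of_int (v l i)) = 0" using c \<open>i \<le> k\<close> by simp
    qed
    hence "\<forall>l<k+1. c l = 0" using indep unfolding lin_indep_int_def by blast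
    thus False using l0 by simp
  qed
  define \<alpha> where "\<alpha> = (\<lambda>l. if l = j then 0 else - c l / c j)"
  have "\<forall>i\<le>k. real_of_int (w i) = (\<Sum>l<k+1. \<alpha> l * of_int (v l i))"
  proof (intro allI impI)
    fix i assume i: "i \<le> k"
    have "(\<Sum>l<k+1. \<alpha> l * of_int (v l i)) = \<alpha> j * of_int (v j i) + (\<Sum>l\<in>{..<k+1}-{j}. \<alpha> l * of_int (v l i))"
      using j by (subst sum.remove[of _ j]) (auto intro!: sum.cong)
    also have "\<dots> = (\<Sum>l\<in>{..<k+1}-{j}. (- c l / c j) * of_int (v l i))"
      by (simp add: \<alpha>_def)
    also have "\<dots> = - (\<Sum>l\<in>{..<k+1}-{j}. c l * of_int (v l i)) / c j"
      by (simp add: sum_divide_distrib sum_negf)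
    also have "\<dots> = of_int (w i)" using c i split[of i] cj by (simp add: field_simps)
    finally show "real_of_int (w i) = (\<Sum>l<k+1. \<alpha> l * of_int (v l i))" by simp
  qed
  moreover have "\<alpha> j = 0" unfolding \<alpha>_def by simp
  ultimately show ?thesis by blast
qed

lemma exchange:
  assumes indep: "lin_indep_int k (k+1) v" and k: "k \<ge> 1" and w: "\<exists>i\<le>k. w i \<noteq> 0"
  shows "\<exists>j\<le>k. lin_indep_int k (k+1) (v(j:=w))"
proof (rule ccontr)
  assume "\<not> ?thesis"
  hence dep: "\<And>j. j \<le> k \<Longrightarrow> \<not> lin_indep_int k (k+1) (v(j:=w))" by blast
  obtain \<alpha> where \<alpha>: "\<alpha> 0 = 0" "\<forall>i\<le>k. real_of_int (w i) = (\<Sum>l<k+1. \<alpha> l * of_int (v l i))"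
    using exch_rep[OF indep _ dep[of 0]] by auto
  obtain l0 where l0: "l0 < k+1" "\<alpha> l0 \<noteq> 0"
  proof (rule ccontr)
    assume "\<not> thesis"
    hence "\<forall>l<k+1. \<alpha> l = 0" using that by blast
    hence "\<forall>i\<le>k. w i = 0" using \<alpha>(2) by simp
    thus False using w by blast
  qed
  obtain \<beta> where \<beta>: "\<beta> l0 = 0" "\<forall>i\<le>k. real_of_int (w i) = (\<Sum>l<k+1. \<beta> l * of_int (v l i))"
    using exch_rep[OF indep _ dep[of l0]] l0 by auto
  have "\<forall>i\<le>k. (\<Sum>l<k+1. (\<alpha> l - \<beta> l) * of_int (v l i)) = 0"
  proof (intro allI impI)
    fix i assume i: "i \<le> k"
    have "(\<Sum>l<k+1. (\<alpha> l - \<beta> l) * of_int (v l i)) = (\<Sum>l<k+1. \<alpha> l * of_int (v l i)) - (\<Sum>l<k+1. \<beta> l * of_int (v l i))"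
      by (simp only: left_diff_distrib sum_subtractf)
    also have "\<dots> = 0" using \<alpha>(2)[rule_format, OF i] \<beta>(2)[rule_format, OF i] by linarith
    finally show "(\<Sum>l<k+1. (\<alpha> l - \<beta> l) * of_int (v l i)) = 0" .
  qed
  hence "\<forall>l<k+1. \<alpha> l - \<beta> l = 0"
    by (rule mp[OF indep[unfolded lin_indep_int_def, THEN spec[of _ "\<lambda>l. \<alpha> l - \<beta> l"]]])
  thus False using l0 \<beta>(1) by auto
qed

lemma underdetermined:
  assumes "r \<le> k"
  shows "\<exists>n::nat\<Rightarrow>real. (\<exists>i\<le>k. n i \<noteq> 0) \<and> (\<forall>l<r. (\<Sum>i\<le>k. n i * of_int (v l i)) = 0)"
proof -
  define A where "A = mat (k+1) (k+1) (\<lambda>(l,i). if l < r then real_of_int (v l i) else 0)"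
  have Ac: "A \<in> carrier_mat (k+1) (k+1)" unfolding A_def by simp
  have "det A = (\<Sum>j<k+1. A $$ (k,j) * cofactor A k j)" by (rule laplace_expansion_row[OF Ac]) simp
  also have "\<dots> = 0" using assms by (simp add: A_def)
  finally obtain c where c: "c \<in> carrier_vec (k+1)" "c \<noteq> 0\<^sub>v (k+1)" "A *\<^sub>v c = 0\<^sub>v (k+1)"
    using det_0_iff_vec_prod_zero[OF Ac] by auto
  define n where "n = (\<lambda>i. c $ i)"
  have "\<exists>i\<le>k. n i \<noteq> 0"
  proof (rule ccontr)
    assume "\<not> ?thesis"
    hence "c = 0\<^sub>v (k+1)" using c(1) unfolding n_def by (intro eq_vecI) auto
    thus False using c(2) by simp
  qed
  moreover have "\<forall>l<r. (\<Sum>i\<le>k. n i * of_int (v l i)) = 0"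
  proof (intro allI impI)
    fix l assume l: "l < r"
    have "(A *\<^sub>v c) $ l = 0" using c(3) l assms by simp
    hence "(\<Sum>i\<in>{0..<k+1}. real_of_int (v l i) * c $ i) = 0"
      using l assms c(1) by (simp add: A_def scalar_prod_def row_def)
    moreover have eq: "{0..<k+1} = {..k}" by auto
    ultimately show "(\<Sum>i\<le>k. n i * of_int (v l i)) = 0" unfolding eq[symmetric] by (simp add: n_def mult.commute)
  qed
  ultimately show ?thesis by blast
qed

lemma hyperplane:
  assumes "\<not>(\<exists>v. lin_indep_int k (k+1) v \<and> (\<forall>l<k+1. v l \<in> S))"
  shows "\<exists>n::nat\<Rightarrow>real. (\<exists>i\<le>k. n i \<noteq> 0) \<and> (\<forall>u\<in>S. (\<Sum>i\<le>k. n i * of_int (u i)) = 0)"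
proof -
  define R where "R = {r. r \<le> k+1 \<and> (\<exists>v. lin_indep_int k r v \<and> (\<forall>l<r. v l \<in> S))}"
  have "0 \<in> R" unfolding R_def lin_indep_int_def by auto
  have fR: "finite R" unfolding R_def by simp
  define r where "r = Max R"
  have rR: "r \<in> R" unfolding r_def using fR \<open>0 \<in> R\<close> by (intro Max_in) auto
  have rmax: "\<And>r'. r' \<in> R \<Longrightarrow> r' \<le> r" unfolding r_def using fR by simp
  obtain v where v: "lin_indep_int k r v" "\<forall>l<r. v l \<in> S" using rR unfolding R_def by blast
  have "r \<noteq> k+1"
  proof
    assume "r = k+1"
    thus False using assms v by blast
  qed
  hence rk: "r \<le> k" using rR unfolding R_def by simp
  obtain n :: "nat \<Rightarrow> real" where n: "\<exists>i\<le>k. n i \<noteq> 0" "\<forall>l<r. (\<Sum>i\<le>k. n i * of_int (v l i)) = 0"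
    using underdetermined[OF rk, of v] by blast
  have "\<forall>u\<in>S. (\<Sum>i\<le>k. n i * of_int (u i)) = 0"
  proof
    fix u assume u: "u \<in> S"
    have "r+1 \<notin> R"
    proof
      assume "r+1 \<in> R"
      hence "r+1 \<le> r" by (rule rmax)
      thus False by simp
    qed
    moreover have "\<forall>l<r+1. (v(r:=u)) l \<in> S" using v(2) u by auto
    ultimately have dep: "\<not> lin_indep_int k (r+1) (v(r:=u))" using rk unfolding R_def by auto
    obtain c :: "nat \<Rightarrow> real" and l0 where c: "\<forall>i\<le>k. (\<Sum>l<r+1. c l * of_int ((v(r:=u)) l i)) = 0" and l0: "l0 < r+1" "c l0 \<noteq> 0"
      using dep unfolding lin_indep_int_def by blast
    have split: "(\<Sum>l<r+1. c l * of_int ((v(r:=u)) l i)) = c r * of_int (u i) + (\<Sum>l<r. c l * of_int (v l i))" for i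
      by simp
    have cr: "c r \<noteq> 0"
    proof
      assume "c r = 0"
      hence "\<forall>i\<le>k. (\<Sum>l<r. c l * of_int (v l i)) = 0" using c split by simp
      hence "\<forall>l<r. c l = 0" using v(1) unfolding lin_indep_int_def by blast
      thus False using l0 \<open>c r = 0\<close> by (cases "l0 = r") auto
    qed
    have ui: "of_int (u i) = (\<Sum>l<r. (- c l / c r) * of_int (v l i))" if "i \<le> k" for i
    proof -
      have "c r * of_int (u i) = - (\<Sum>l<r. c l * of_int (v l i))" using c that split[of i] by simp
      hence "of_int (u i) = - (\<Sum>l<r. c l * of_int (v l i)) / c r" using cr by (simp add: field_simps)
      thus ?thesis by (simp add: sum_divide_distrib sum_negf)
    qed
    have "(\<Sum>i\<le>k. n i * of_int (u i)) = (\<Sum>i\<le>k. \<Sum>l<r. n i * ((- c l / c r) * of_int (v l i)))"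
      by (rule sum.cong[OF refl]) (simp add: ui sum_distrib_left)
    also have "\<dots> = (\<Sum>l<r. (- c l / c r) * (\<Sum>i\<le>k. n i * of_int (v l i)))"
      by (subst sum.swap) (rule sum.cong[OF refl], simp add: sum_distrib_left mult.left_commute)
    also have "\<dots> = 0" using n(2) by simp
    finally show "(\<Sum>i\<le>k. n i * of_int (u i)) = 0" .
  qed
  thus ?thesis using n(1) by blast
qed



lemma powr_ev_small:
  fixes e c :: real
  assumes "e < 0" "c > 0"
  shows "\<exists>X1\<ge>1. \<forall>X\<ge>X1. X powr e \<le> c"
proof (intro exI[of _ "max 1 (c powr (1/e))"] conjI allI impI)
  fix X assume X: "X \<ge> max 1 (c powr (1/e))"
  have "X powr e \<le> (c powr (1/e)) powr e"
    by (rule powr_mono2') (use assms X in auto)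
  also have "\<dots> = c" using assms by (simp add: powr_powr)
  finally show "X powr e \<le> c" .
qed simp

lemma powr_ev_large:
  fixes e c :: real
  assumes "e > 0"
  shows "\<exists>X1\<ge>1. \<forall>X\<ge>X1. X powr e \<ge> c"
proof (intro exI[of _ "max 1 ((\<bar>c\<bar>+1) powr (1/e))"] conjI allI impI)
  fix X assume X: "X \<ge> max 1 ((\<bar>c\<bar>+1) powr (1/e))"
  have "c \<le> (\<bar>c\<bar>+1)" by simp
  also have "\<dots> = ((\<bar>c\<bar>+1) powr (1/e)) powr e" using assms by (simp add: powr_powr)
  also have "\<dots> \<le> X powr e"
    by (rule powr_mono2) (use assms X in auto)
  finally show "c \<le> X powr e" .
qed simp

lemma floor_eq_close:
  fixes a b w :: real
  assumes "w > 0" "\<lfloor>a / w\<rfloor> = \<lfloor>b / w\<rfloor>"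
  shows "\<bar>a - b\<bar> < w"
proof -
  have "\<bar>a / w - b / w\<bar> < 1"
    using assms(2) floor_correct[of "a/w"] floor_correct[of "b/w"] by linarith
  moreover have "a / w - b / w = (a - b) / w" by (rule diff_divide_distrib[symmetric])
  ultimately have "\<bar>a - b\<bar> / \<bar>w\<bar> < 1" by (simp only: abs_divide)
  hence "\<bar>a - b\<bar> / w < 1" using assms(1) by simp
  thus ?thesis using assms(1) by (simp only: pos_divide_less_eq mult_1)
qed

lemma pigeon:
  fixes zeta :: "nat \<Rightarrow> real" and N k :: nat and w :: "nat \<Rightarrow> real"
  assumes wpos: "\<forall>i\<le>k. w i > 0"
  and cnt: "(\<Prod>i\<le>k. nat \<lceil>(if i = 0 then real N + 1 else 1) / w i\<rceil>) < N + 1"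
  shows "\<exists>x x'. x \<le> N \<and> x' \<le> N \<and> x \<noteq> x' \<and> \<bar>real x - real x'\<bar> < w 0 \<and>
     (\<forall>i\<in>{1..k}. \<bar>frac (zeta i * real x) - frac (zeta i * real x')\<bar> < w i)"
proof -
  define R :: "nat \<Rightarrow> real" where "R = (\<lambda>i. if i = 0 then real N + 1 else 1)"
  define co :: "nat \<Rightarrow> nat \<Rightarrow> real" where "co = (\<lambda>x i. if i = 0 then real x else frac (zeta i * real x))"
  define cell where "cell = (\<lambda>x. restrict (\<lambda>i. nat \<lfloor>co x i / w i\<rfloor>) {..k})"
  define T where "T = (\<Pi>\<^sub>E i\<in>{..k}. {..<nat \<lceil>R i / w i\<rceil>})"
  have co_bd: "0 \<le> co x i \<and> co x i < R i" if "x \<le> N" for x i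
    using that unfolding co_def R_def by (auto simp: frac_lt_1)
  have "cell ` {..N} \<subseteq> T"
  proof
    fix z assume "z \<in> cell ` {..N}"
    then obtain x where x: "x \<le> N" "z = cell x" by auto
    have "nat \<lfloor>co x i / w i\<rfloor> < nat \<lceil>R i / w i\<rceil>" if i: "i \<le> k" for i
    proof -
      have wi: "w i > 0" using wpos i by auto
      have "co x i / w i < R i / w i" using co_bd[OF x(1)] wi by (simp add: divide_strict_right_mono)
      hence "\<lfloor>co x i / w i\<rfloor> < \<lceil>R i / w i\<rceil>" by linarith
      moreover have "0 \<le> \<lfloor>co x i / w i\<rfloor>" using co_bd[OF x(1)] wi by simp
      ultimately show ?thesis by (metis nat_less_eq_zless)
    qed
    thus "z \<in> T" unfolding T_def x(2) cell_def by auto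
  qed
  hence "card (cell ` {..N}) \<le> card T" unfolding T_def by (intro card_mono) (auto intro!: finite_PiE)
  also have "card T = (\<Prod>i\<le>k. nat \<lceil>R i / w i\<rceil>)" unfolding T_def by (simp add: card_PiE)
  also have "\<dots> < N + 1" using cnt unfolding R_def by simp
  finally have lt: "card (cell ` {..N}) < N + 1" .
  have "\<not> inj_on cell {..N}"
  proof
    assume "inj_on cell {..N}"
    hence "card (cell ` {..N}) = N + 1" by (simp add: card_image)
    with lt show False by simp
  qed
  then obtain x x' where xx: "x \<le> N" "x' \<le> N" "x \<noteq> x'" "cell x = cell x'"
    unfolding inj_on_def by auto
  have close: "\<bar>co x i - co x' i\<bar> < w i" if i: "i \<le> k" for i
  proof -
    have wi: "w i > 0" using wpos i by auto
    have "nat \<lfloor>co x i / w i\<rfloor> = nat \<lfloor>co x' i / w i\<rfloor>"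
      using fun_cong[OF xx(4), of i] i unfolding cell_def by simp
    moreover have "0 \<le> \<lfloor>co x i / w i\<rfloor>" "0 \<le> \<lfloor>co x' i / w i\<rfloor>" using co_bd xx wi by auto
    ultimately have "\<lfloor>co x i / w i\<rfloor> = \<lfloor>co x' i / w i\<rfloor>" by (metis nat_eq_iff2 zero_le_floor)
    thus ?thesis using floor_eq_close wi by blast
  qed
  have c0: "\<bar>real x - real x'\<bar> < w 0" using close[of 0] by (simp add: co_def)
  have ci: "\<forall>i\<in>{1..k}. \<bar>frac (zeta i * real x) - frac (zeta i * real x')\<bar> < w i"
  proof
    fix i assume i: "i \<in> {1..k}"
    hence "i \<le> k" "i \<noteq> 0" by auto
    thus "\<bar>frac (zeta i * real x) - frac (zeta i * real x')\<bar> < w i" using close[of i] by (simp add: co_def)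
  qed
  show ?thesis using xx(1-3) c0 ci by blast
qed

lemma diffvec:
  fixes zeta :: "nat \<Rightarrow> real" and x x' :: nat
  defines "d \<equiv> (\<lambda>i. if i = 0 then int x - int x' else \<lfloor>zeta i * real x\<rfloor> - \<lfloor>zeta i * real x'\<rfloor>)"
  shows "real_of_int (d 0) = real x - real x'"
    and "i \<ge> 1 \<Longrightarrow> zeta i * of_int (d 0) - of_int (d i) = frac (zeta i * real x) - frac (zeta i * real x')"
  unfolding d_def frac_def by (auto simp: algebra_simps)

lemma prod_if0:
  fixes f :: "nat \<Rightarrow> 'a::comm_monoid_mult"
  shows "(\<Prod>i\<le>k. f i) = f 0 * (\<Prod>i\<in>{1..k}. f i)"
proof -
  have "{..k} = insert 0 {1..k}" by auto
  thus ?thesis by simp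
qed

lemma dirichlet:
  fixes zeta :: "nat \<Rightarrow> real"
  assumes k: "k \<ge> 1" and eta: "0 < eta" "eta < 1 / real k"
  shows "\<exists>X0. \<forall>X\<ge>X0. has_indep_sols k 1 zeta eta X"
proof -
  obtain X1 where X1: "X1 \<ge> 1" "\<forall>X\<ge>X1. X powr (1 / real k - eta) \<ge> 2"
    using powr_ev_large[of "1 / real k - eta" 2] eta by auto
  show ?thesis
  proof (intro exI allI impI)
    fix X :: real assume X: "X \<ge> X1"
    hence X1': "X \<ge> 1" using X1 by simp
    define Q where "Q = nat \<lfloor>X powr (1 / real k)\<rfloor>"
    define N where "N = nat \<lfloor>X\<rfloor>"
    have Xe1: "X powr eta \<ge> 1" using X1' eta by (simp add: ge_one_powr_ge_zero)
    have "X powr (1 / real k) = X powr eta * X powr (1 / real k - eta)" by (simp add: powr_add[symmetric])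
    also have "\<dots> \<ge> X powr eta * 2" using X1 X Xe1 by (intro mult_left_mono) auto
    finally have big: "X powr (1 / real k) \<ge> 2 * X powr eta" by simp
    have Qr: "real Q > X powr (1 / real k) - 1" "real Q \<le> X powr (1 / real k)"
      unfolding Q_def using X1' by (auto simp: of_nat_nat)
    have Qge: "real Q \<ge> X powr eta" using Qr big Xe1 by linarith
    hence Qpos: "real Q \<ge> 1" using Xe1 by linarith
    have "real Q ^ k \<le> (X powr (1 / real k)) ^ k" using Qr by (intro power_mono) auto
    also have "\<dots> = X" using X1' k by (simp add: powr_realpow[symmetric] powr_powr)
    finally have "real (Q ^ k) \<le> X" by simp
    hence QkN: "Q ^ k \<le> N" unfolding N_def by (metis le_nat_floor floor_of_nat of_nat_le_iff le_floor_iff)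
    define w where "w = (\<lambda>i::nat. if i = 0 then real N + 1 else 1 / real Q)"
    have wpos: "\<forall>i\<le>k. w i > 0" unfolding w_def using Qpos by auto
    have "(\<Prod>i\<le>k. nat \<lceil>(if i = 0 then real N + 1 else 1) / w i\<rceil>) = (\<Prod>i\<le>k. (if i = 0 then 1 else Q))"
      by (rule prod.cong[OF refl]) (auto simp: w_def)
    also have "\<dots> = Q ^ k" by (simp add: prod_if0)
    finally have cnt: "(\<Prod>i\<le>k. nat \<lceil>(if i = 0 then real N + 1 else 1) / w i\<rceil>) < N + 1" using QkN by simp
    obtain x x' where xx: "x \<le> N" "x' \<le> N" "x \<noteq> x'" "\<bar>real x - real x'\<bar> < w 0"
       "\<forall>i\<in>{1..k}. \<bar>frac (zeta i * real x) - frac (zeta i * real x')\<bar> < w i"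
      using pigeon[OF wpos cnt, of zeta] by blast
    define d where "d = (\<lambda>i. if i = 0 then int x - int x' else \<lfloor>zeta i * real x\<rfloor> - \<lfloor>zeta i * real x'\<rfloor>)"
    have d0: "real_of_int (d 0) = real x - real x'"
      and di: "\<And>i. i \<ge> 1 \<Longrightarrow> zeta i * of_int (d 0) - of_int (d i) = frac (zeta i * real x) - frac (zeta i * real x')"
      unfolding d_def using diffvec by auto
    have NX: "real N \<le> X" unfolding N_def using X1' by linarith
    have QX: "1 / real Q \<le> X powr (- eta)"
      using Qge Xe1 X1' by (simp add: powr_minus divide_simps)
    have "lin_indep_int k 1 (\<lambda>l. d)" using xx(3) by (intro nonzero_indep1) (auto simp: d_def)
    moreover have "\<bar>real_of_int (d 0)\<bar> \<le> X" using d0 xx NX by linarith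
    moreover have "\<forall>i\<in>{1..k}. \<bar>zeta i * of_int (d 0) - of_int (d i)\<bar> \<le> X powr (- eta)"
    proof
      fix i assume i: "i \<in> {1..k}"
      have "\<bar>zeta i * of_int (d 0) - of_int (d i)\<bar> < w i" using di[of i] xx(5) i by auto
      thus "\<bar>zeta i * of_int (d 0) - of_int (d i)\<bar> \<le> X powr (- eta)" using QX i by (simp add: w_def)
    qed
    ultimately show "has_indep_sols k 1 zeta eta X" unfolding has_indep_sols_def
      by (intro exI[of _ "\<lambda>l. d"]) auto
  qed
qed

lemma powr_pow: "X > 0 \<Longrightarrow> (X powr a) ^ k = X powr (a * real k)"
  by (simp add: powr_realpow[symmetric] powr_powr)

lemma card_minus1: "r \<le> k \<Longrightarrow> card ({..k} - {r}) = k"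
  by (simp add: card_Diff_singleton)

lemma sum_PQ:
  fixes A B C D :: real
  assumes j: "j \<le> k" and k: "k \<ge> 1"
  shows "(\<Sum>r\<le>k. (if r = j then A else B) * (\<Prod>r'\<in>{..k}-{r}. if r' = j then C else D))
         = A * D ^ k + real k * (B * C * D ^ (k-1))"
proof -
  have "(\<Sum>r\<le>k. (if r = j then A else B) * (\<Prod>r'\<in>{..k}-{r}. if r' = j then C else D))
     = (if j = j then A else B) * (\<Prod>r'\<in>{..k}-{j}. if r' = j then C else D)
       + (\<Sum>r\<in>{..k}-{j}. (if r = j then A else B) * (\<Prod>r'\<in>{..k}-{r}. if r' = j then C else D))"
    using j by (subst sum.remove[of _ j]) auto
  also have "(\<Prod>r'\<in>{..k}-{j}. if r' = j then C else D) = D ^ k"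
    using card_minus1[OF j] by (simp add: prod.cong[of _ _ _ "\<lambda>_. D"])
  also have "(\<Sum>r\<in>{..k}-{j}. (if r = j then A else B) * (\<Prod>r'\<in>{..k}-{r}. if r' = j then C else D))
        = (\<Sum>r\<in>{..k}-{j}. B * (C * D ^ (k-1)))"
  proof (rule sum.cong[OF refl])
    fix r assume r: "r \<in> {..k}-{j}"
    have "(\<Prod>r'\<in>{..k}-{r}. if r' = j then C else D)
        = (if j = j then C else D) * (\<Prod>r'\<in>{..k}-{r}-{j}. if r' = j then C else D)"
      using r j by (subst prod.remove[of _ j]) auto
    also have "(\<Prod>r'\<in>{..k}-{r}-{j}. if r' = j then C else D) = D ^ (k-1)"
    proof -
      have "card ({..k}-{r}-{j}) = k - 1" using r j by (simp add: card_Diff_singleton)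
      thus ?thesis by (simp add: prod.cong[of _ _ _ "\<lambda>_. D"])
    qed
    finally show "(if r = j then A else B) * (\<Prod>r'\<in>{..k}-{r}. if r' = j then C else D) = B * (C * D ^ (k-1))"
      using r by simp
  qed
  also have "\<dots> = real k * (B * (C * D ^ (k-1)))" using card_minus1[OF j] by simp
  finally show ?thesis by simp
qed

lemma indep_eta_mono:
  assumes "has_indep_sols k j zeta eta X" "X \<ge> 1" "eta' \<le> eta"
  shows "has_indep_sols k j zeta eta' X"
proof -
  have "X powr (-eta) \<le> X powr (-eta')" using assms(2,3) by (intro powr_mono) auto
  thus ?thesis using assms(1) unfolding has_indep_sols_def by (meson order_trans)
qed

lemma F1:
  fixes zeta :: "nat \<Rightarrow> real"
  assumes k: "k \<ge> 1" and eta: "eta > 1 / real k"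
    and H: "\<forall>X0. \<exists>X\<ge>X0. has_indep_sols k (k+1) zeta eta X"
  shows False
proof -
  define C where "C = fact (k+1) * (real k + 1)"
  have Cpos: "C > 0" unfolding C_def by simp
  have e: "1 - eta * real k < 0" using eta k by (simp add: field_simps)
  obtain X1 where X1: "X1 \<ge> 1" "\<forall>X\<ge>X1. X powr (1 - eta * real k) \<le> 1 / (2 * C)"
    using powr_ev_small[OF e, of "1/(2*C)"] Cpos by auto
  obtain X where X: "X \<ge> X1" "has_indep_sols k (k+1) zeta eta X" using H by blast
  have Xp: "X > 0" using X X1 by simp
  obtain v where v: "lin_indep_int k (k+1) v"
    "\<forall>l<k+1. \<bar>real_of_int (v l 0)\<bar> \<le> X \<and>
       (\<forall>i\<in>{1..k}. \<bar>zeta i * of_int (v l 0) - of_int (v l i)\<bar> \<le> X powr (-eta))"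
    using X(2) unfolding has_indep_sols_def by blast
  have "1 \<le> fact (k+1) * (\<Sum>r\<le>k. (if r = 0 then X else X) * (\<Prod>r'\<in>{..k}-{r}. if r' = 0 then X powr (-eta) else X powr (-eta)))"
    by (rule det_bound[OF v(1) k, where zeta=zeta]) (use v(2) in auto)
  also have "\<dots> = fact (k+1) * (X * (X powr (-eta)) ^ k + real k * (X * X powr (-eta) * (X powr (-eta)) ^ (k-1)))"
    using sum_PQ[of 0 k X X "X powr (-eta)" "X powr (-eta)"] k by simp
  also have "X * X powr (-eta) * (X powr (-eta)) ^ (k-1) = X * (X powr (-eta)) ^ k"
    using k by (metis (no_types, lifting) mult.assoc power_eq_if not_one_le_zero)
  also have "X * (X powr (-eta)) ^ k = X powr (1 - eta * real k)"
  proof -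
    have "(X powr (-eta)) ^ k = X powr (-eta * real k)" by (rule powr_pow[OF Xp])
    moreover have "X = X powr 1" using Xp by simp
    ultimately have "X * (X powr (-eta)) ^ k = X powr 1 * X powr (-eta * real k)" by simp
    also have "\<dots> = X powr (1 - eta * real k)" by (subst powr_add[symmetric]) simp
    finally show ?thesis .
  qed
  finally have "1 \<le> C * X powr (1 - eta * real k)" unfolding C_def by (simp add: algebra_simps)
  also have "\<dots> \<le> C * (1 / (2*C))" using X1 X Cpos by (intro mult_left_mono) auto
  also have "\<dots> = 1/2" using Cpos by simp
  finally show False by simp
qed

lemma F3:
  fixes zeta :: "nat \<Rightarrow> real"
  assumes k: "k \<ge> 1" and th: "theta > 1 / real k"
    and Hh: "\<forall>Y\<ge>Y0. has_indep_sols k 1 zeta theta Y"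
  shows "\<exists>c < 1 / real k. \<forall>eta. (\<forall>X0. \<exists>X\<ge>X0. has_indep_sols k (k+1) zeta eta X) \<longrightarrow> eta \<le> c"
proof -
  define c where "c = 1 / (real k * theta + real k - 1)"
  have kth: "real k * theta > 1" using th k by (simp add: field_simps)
  have den: "real k * theta + real k - 1 > real k" using kth by simp
  have kpos: "real k > 0" using k by simp
  have cpos: "c > 0" unfolding c_def using den kpos by simp
  have clt: "c < 1 / real k" unfolding c_def using den kpos by (simp add: frac_less2)
  have "\<forall>eta. (\<forall>X0. \<exists>X\<ge>X0. has_indep_sols k (k+1) zeta eta X) \<longrightarrow> eta \<le> c"
  proof (intro allI impI)
    fix eta assume H: "\<forall>X0. \<exists>X\<ge>X0. has_indep_sols k (k+1) zeta eta X"
    show "eta \<le> c"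
    proof (rule ccontr)
      assume "\<not> eta \<le> c"
      hence ec: "eta > c" by simp
      define e where "e = min eta ((c + 1 / real k) / 2)"
      have m1: "(c + 1 / real k) / 2 < 1 / real k" "c < (c + 1 / real k) / 2" using clt by simp_all
      have e1: "c < e" "e < 1 / real k" "e \<le> eta" unfolding e_def using ec m1
        by (simp_all add: min_less_iff_disj)
      have H': "\<forall>X0. \<exists>X\<ge>X0. has_indep_sols k (k+1) zeta e X"
      proof
        fix X0
        obtain X where "X \<ge> max X0 1" "has_indep_sols k (k+1) zeta eta X" using H by blast
        thus "\<exists>X\<ge>X0. has_indep_sols k (k+1) zeta e X"
          using indep_eta_mono[of k "k+1" zeta eta X e] e1 by auto
      qed
      have epos: "e > 0" using e1 cpos by simp
      have ek: "(real k - 1) * e < 1"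
      proof -
        have "(real k - 1) * e \<le> real k * e" using epos by simp
        also have "\<dots> < real k * (1 / real k)" using e1 kpos by (intro mult_strict_left_mono) auto
        finally show ?thesis using kpos by simp
      qed
      have ce: "1 < e * (real k * theta + real k - 1)"
        using e1(1) den kpos unfolding c_def by (simp add: field_simps)
      define lo where "lo = (1 - (real k - 1) * e) / theta"
      have thpos: "theta > 0" using th kpos by (smt (verit) divide_pos_pos)
      have lo_lt: "lo < real k * e"
        unfolding lo_def using ce thpos by (simp add: field_simps)
      have lo_pos: "lo > 0" unfolding lo_def using ek thpos by simp
      define a where "a = (lo + real k * e) / 2"
      have apos: "a > 0" unfolding a_def using lo_pos epos kpos by (simp add: add_pos_pos)
      define e1x where "e1x = a - real k * e"
      define e2x where "e2x = 1 - (real k - 1) * e - a * theta"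
      have e1n: "e1x < 0" unfolding e1x_def a_def using lo_lt by simp
      have e2n: "e2x < 0"
      proof -
        have "lo * theta = 1 - (real k - 1) * e" unfolding lo_def using thpos by simp
        moreover have "a * theta > lo * theta" using lo_lt thpos unfolding a_def by (intro mult_strict_right_mono) auto
        ultimately show ?thesis unfolding e2x_def by simp
      qed
      define C where "C = fact (k+1) * (real k + 1)"
      have Cpos: "C > 0" unfolding C_def by simp
      obtain X1 where X1: "X1 \<ge> 1" "\<forall>X\<ge>X1. X powr e1x \<le> 1 / (2 * C)"
        using powr_ev_small[OF e1n, of "1/(2*C)"] Cpos by auto
      obtain X2 where X2: "X2 \<ge> 1" "\<forall>X\<ge>X2. X powr e2x \<le> 1 / (2 * C)"
        using powr_ev_small[OF e2n, of "1/(2*C)"] Cpos by auto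
      obtain X3 where X3: "X3 \<ge> 1" "\<forall>X\<ge>X3. X powr a \<ge> Y0"
        using powr_ev_large[OF apos, of Y0] by auto
      obtain X where X: "X \<ge> max X1 (max X2 X3)" "has_indep_sols k (k+1) zeta e X" using H' by blast
      have Xp: "X > 0" using X X1 by simp
      define Y where "Y = X powr a"
      have Ypos: "Y > 0" unfolding Y_def using Xp by simp
      have "Y \<ge> Y0" unfolding Y_def using X X3 by auto
      hence "has_indep_sols k 1 zeta theta Y" using Hh by blast
      then obtain w where w: "lin_indep_int k 1 w"
        "\<forall>l<1. \<bar>real_of_int (w l 0)\<bar> \<le> Y \<and>
         (\<forall>i\<in>{1..k}. \<bar>zeta i * of_int (w l 0) - of_int (w l i)\<bar> \<le> Y powr (-theta))"
        unfolding has_indep_sols_def by blast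
      obtain v where v: "lin_indep_int k (k+1) v"
        "\<forall>l<k+1. \<bar>real_of_int (v l 0)\<bar> \<le> X \<and>
           (\<forall>i\<in>{1..k}. \<bar>zeta i * of_int (v l 0) - of_int (v l i)\<bar> \<le> X powr (-e))"
        using X(2) unfolding has_indep_sols_def by blast
      obtain j where j: "j \<le> k" "lin_indep_int k (k+1) (v(j := w 0))"
        using exchange[OF v(1) k indep1_nonzero[OF w(1)]] by blast
      have "1 \<le> fact (k+1) * (\<Sum>r\<le>k. (if r = j then Y else X) * (\<Prod>r'\<in>{..k}-{r}. if r' = j then Y powr (-theta) else X powr (-e)))"
        by (rule det_bound[OF j(2) k, where zeta=zeta]) (use v(2) w(2) in auto)
      also have "\<dots> = fact (k+1) * (Y * (X powr (-e)) ^ k + real k * (X * Y powr (-theta) * (X powr (-e)) ^ (k-1)))"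
        using sum_PQ[OF j(1) k, of Y X "Y powr (-theta)" "X powr (-e)"] by simp
      also have "Y * (X powr (-e)) ^ k = X powr e1x"
      proof -
        have "Y * (X powr (-e)) ^ k = X powr a * X powr (- e * real k)" unfolding Y_def using powr_pow[OF Xp] by simp
        also have "\<dots> = X powr e1x" unfolding e1x_def by (subst powr_add[symmetric]) (simp add: algebra_simps)
        finally show ?thesis .
      qed
      also have "X * Y powr (-theta) * (X powr (-e)) ^ (k-1) = X powr e2x"
      proof -
        have "X * Y powr (-theta) * (X powr (-e)) ^ (k-1) = X powr 1 * X powr (- (a * theta)) * X powr (- e * real (k-1))"
          unfolding Y_def using powr_pow[OF Xp] Xp by (simp add: powr_powr)
        also have "\<dots> = X powr (1 + - (a * theta) + - e * real (k-1))" by (simp only: powr_add)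
        also have "real (k-1) = real k - 1" using k by simp
        also have "1 + - (a * theta) + - e * (real k - 1) = e2x" unfolding e2x_def by (simp add: algebra_simps)
        finally show ?thesis .
      qed
      finally have "1 \<le> fact (k+1) * (X powr e1x + real k * X powr e2x)" .
      also have "\<dots> \<le> fact (k+1) * (1 / (2*C) + real k * (1 / (2*C)))"
        using X X1 X2 kpos by (intro mult_left_mono add_mono mult_left_mono) auto
      also have "\<dots> = 1/2" using Cpos unfolding C_def by (simp add: field_simps)
      finally show False by simp
    qed
  qed
  thus ?thesis using clt by blast
qed

lemma sum_if0:
  fixes f :: "nat \<Rightarrow> 'a::comm_monoid_add"
  shows "(\<Sum>i\<le>k. f i) = f 0 + (\<Sum>i\<in>{1..k}. f i)"
proof -
  have "{..k} = insert 0 {1..k}" by auto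
  thus ?thesis by simp
qed

lemma PHL:
  fixes zeta :: "nat \<Rightarrow> real" and N :: nat and a b M Y theta eta :: real
  assumes k: "k \<ge> 1" and ab: "a > 0" "b > 0" and M: "M > 0"
    and bM: "b \<le> 1 / M" and MN: "1 / M \<le> real N powr (-eta)"
    and aY: "real k * a \<le> Y" and bY: "real k * b \<le> Y powr (-theta)"
    and cnt: "\<forall>j\<le>k. (\<Prod>i\<le>k. nat \<lceil>(if i = 0 then real N + 1 else 1) /
          (if i = j then (if i = 0 then real N + 1 else 1 / M) else (if i = 0 then a else b))\<rceil>) < N + 1"
    and empty: "\<not> has_indep_sols k 1 zeta theta Y"
  shows "has_indep_sols k (k+1) zeta eta (real N)"
proof (rule ccontr)
  assume H: "\<not> ?thesis"
  define S where "S = {u::nat\<Rightarrow>int. \<bar>real_of_int (u 0)\<bar> \<le> real N \<and>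
      (\<forall>i\<in>{1..k}. \<bar>zeta i * of_int (u 0) - of_int (u i)\<bar> \<le> real N powr (-eta))}"
  have "\<not>(\<exists>v. lin_indep_int k (k+1) v \<and> (\<forall>l<k+1. v l \<in> S))"
    using H unfolding has_indep_sols_def S_def by blast
  from hyperplane[OF this] obtain n :: "nat \<Rightarrow> real" where
    n: "\<exists>i\<le>k. n i \<noteq> 0" "\<forall>u\<in>S. (\<Sum>i\<le>k. n i * of_int (u i)) = 0" by blast
  define m where "m = (\<lambda>i. if i = 0 then n 0 + (\<Sum>i'\<in>{1..k}. n i' * zeta i') else - n i)"
  define e where "e = (\<lambda>(u::nat\<Rightarrow>int) i. if i = 0 then real_of_int (u 0) else zeta i * of_int (u 0) - of_int (u i))"
  have rel: "(\<Sum>i\<le>k. n i * of_int (u i)) = (\<Sum>i\<le>k. m i * e u i)" for u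
  proof -
    have "(\<Sum>i\<le>k. m i * e u i) = m 0 * e u 0 + (\<Sum>i\<in>{1..k}. m i * e u i)" by (rule sum_if0)
    also have "(\<Sum>i\<in>{1..k}. m i * e u i) = (\<Sum>i\<in>{1..k}. n i * of_int (u i) - (n i * zeta i) * of_int (u 0))"
      by (rule sum.cong[OF refl]) (auto simp: m_def e_def algebra_simps)
    also have "\<dots> = (\<Sum>i\<in>{1..k}. n i * of_int (u i)) - (\<Sum>i\<in>{1..k}. n i * zeta i) * of_int (u 0)"
      by (simp add: sum_subtractf sum_distrib_right)
    also have "m 0 * e u 0 = n 0 * of_int (u 0) + (\<Sum>i\<in>{1..k}. n i * zeta i) * of_int (u 0)"
      by (simp add: m_def e_def algebra_simps)
    finally have "(\<Sum>i\<le>k. m i * e u i) = n 0 * of_int (u 0) + (\<Sum>i\<in>{1..k}. n i * of_int (u i))" by simp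
    also have "\<dots> = (\<Sum>i\<le>k. n i * of_int (u i))" by (rule sum_if0[symmetric])
    finally show ?thesis by simp
  qed
  have mnz: "\<exists>i\<le>k. m i \<noteq> 0"
  proof (rule ccontr)
    assume "\<not> ?thesis"
    hence m0: "\<forall>i\<le>k. m i = 0" by simp
    have ni: "n i = 0" if "i \<in> {1..k}" for i using m0 that unfolding m_def by (metis atLeastAtMost_iff neg_equal_0_iff_equal not_one_le_zero)
    have "m 0 = n 0" unfolding m_def using ni by simp
    hence "n 0 = 0" using m0 by simp
    hence "\<forall>i\<le>k. n i = 0" using ni by (metis atLeastAtMost_iff le0 le_neq_implies_less less_one not_less)
    thus False using n(1) by blast
  qed
  define s where "s = (\<lambda>i::nat. if i = 0 then a else b)"
  have spos: "s i > 0" for i unfolding s_def using ab by simp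
  define f where "f = (\<lambda>i. \<bar>m i\<bar> * s i)"
  define F where "F = Max (f ` {..k})"
  have "F \<in> f ` {..k}" unfolding F_def by (intro Max_in) auto
  then obtain j0 where j0: "j0 \<le> k" "f j0 = F" by auto
  have fmax: "f i \<le> f j0" if "i \<le> k" for i unfolding j0(2) F_def using that by (intro Max_ge) auto
  have fj0: "f j0 > 0"
  proof -
    obtain i where i: "i \<le> k" "m i \<noteq> 0" using mnz by blast
    have "f i > 0" unfolding f_def using i spos by simp
    thus ?thesis using fmax[OF i(1)] by simp
  qed
  have mj0: "\<bar>m j0\<bar> > 0" using fj0 spos[of j0] unfolding f_def by (simp add: zero_less_mult_iff)
  define w where "w = (\<lambda>i. if i = j0 then (if i = 0 then real N + 1 else 1 / M) else s i)"
  have wpos: "\<forall>i\<le>k. w i > 0" unfolding w_def using spos M by auto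
  have cnt': "(\<Prod>i\<le>k. nat \<lceil>(if i = 0 then real N + 1 else 1) / w i\<rceil>) < N + 1"
    using cnt j0(1) unfolding w_def s_def by blast
  obtain x x' where xx: "x \<le> N" "x' \<le> N" "x \<noteq> x'" "\<bar>real x - real x'\<bar> < w 0"
       "\<forall>i\<in>{1..k}. \<bar>frac (zeta i * real x) - frac (zeta i * real x')\<bar> < w i"
    using pigeon[OF wpos cnt', of zeta] by blast
  define d where "d = (\<lambda>i. if i = 0 then int x - int x' else \<lfloor>zeta i * real x\<rfloor> - \<lfloor>zeta i * real x'\<rfloor>)"
  have d0: "real_of_int (d 0) = real x - real x'"
    and di: "\<And>i. i \<ge> 1 \<Longrightarrow> zeta i * of_int (d 0) - of_int (d i) = frac (zeta i * real x) - frac (zeta i * real x')"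
    unfolding d_def using diffvec by auto
  have close: "\<bar>e d i\<bar> < w i" if "i \<le> k" for i
  proof (cases "i = 0")
    case True thus ?thesis using xx(4) d0 by (simp add: e_def)
  next
    case False
    hence "i \<in> {1..k}" using that by auto
    thus ?thesis using xx(5) di[of i] False by (simp add: e_def)
  qed
  have dS: "d \<in> S"
  proof -
    have "\<bar>real_of_int (d 0)\<bar> \<le> real N" using d0 xx(1,2) by linarith
    moreover have "\<forall>i\<in>{1..k}. \<bar>zeta i * of_int (d 0) - of_int (d i)\<bar> \<le> real N powr (-eta)"
    proof
      fix i assume i: "i \<in> {1..k}"
      have "w i \<le> 1 / M" unfolding w_def s_def using i bM by auto
      moreover have "\<bar>e d i\<bar> < w i" using close i by auto
      ultimately show "\<bar>zeta i * of_int (d 0) - of_int (d i)\<bar> \<le> real N powr (-eta)"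
        using MN i by (simp add: e_def)
    qed
    ultimately show ?thesis unfolding S_def by blast
  qed
  have zero: "(\<Sum>i\<le>k. m i * e d i) = 0" using n(2) dS rel by simp
  have "m j0 * e d j0 + (\<Sum>i\<in>{..k}-{j0}. m i * e d i) = 0"
    using zero j0(1) by (simp add: sum.remove[of "{..k}" j0])
  hence "\<bar>m j0\<bar> * \<bar>e d j0\<bar> = \<bar>\<Sum>i\<in>{..k}-{j0}. m i * e d i\<bar>"
    by (metis abs_minus_cancel abs_mult add_eq_0_iff)
  also have "\<dots> \<le> (\<Sum>i\<in>{..k}-{j0}. \<bar>m i\<bar> * \<bar>e d i\<bar>)" by (rule order_trans[OF sum_abs]) (simp add: abs_mult)
  also have "\<dots> \<le> (\<Sum>i\<in>{..k}-{j0}. f j0)"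
  proof (rule sum_mono)
    fix i assume i: "i \<in> {..k}-{j0}"
    have "\<bar>e d i\<bar> \<le> s i" using close[of i] i unfolding w_def by auto
    hence "\<bar>m i\<bar> * \<bar>e d i\<bar> \<le> \<bar>m i\<bar> * s i" by (intro mult_left_mono) auto
    also have "\<dots> \<le> f j0" using fmax[of i] i unfolding f_def by auto
    finally show "\<bar>m i\<bar> * \<bar>e d i\<bar> \<le> f j0" .
  qed
  also have "\<dots> = real k * (\<bar>m j0\<bar> * s j0)" using card_minus1[OF j0(1)] unfolding f_def by simp
  finally have "\<bar>m j0\<bar> * \<bar>e d j0\<bar> \<le> \<bar>m j0\<bar> * (real k * s j0)" by (simp add: algebra_simps)
  hence key: "\<bar>e d j0\<bar> \<le> real k * s j0" using mj0 by (simp add: mult_le_cancel_left_pos)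
  have all: "\<bar>e d i\<bar> \<le> real k * s i" if "i \<le> k" for i
  proof (cases "i = j0")
    case True thus ?thesis using key by simp
  next
    case False
    hence "\<bar>e d i\<bar> < s i" using close[OF that] unfolding w_def by simp
    moreover have "s i \<le> real k * s i" using k spos[of i] by simp
    ultimately show ?thesis by simp
  qed
  have "has_indep_sols k 1 zeta theta Y"
    unfolding has_indep_sols_def
  proof (intro exI[of _ "\<lambda>l. d"] conjI allI impI ballI)
    show "lin_indep_int k 1 (\<lambda>l. d)" using xx(3) by (intro nonzero_indep1) (auto simp: d_def)
  next
    fix l :: nat assume "l < 1"
    show "\<bar>real_of_int (d 0)\<bar> \<le> Y" using all[of 0] aY by (simp add: e_def s_def)
  next
    fix l :: nat and i assume "l < 1" "i \<in> {1..k}"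
    thus "\<bar>zeta i * of_int (d 0) - of_int (d i)\<bar> \<le> Y powr (-theta)"
      using all[of i] bY by (simp add: e_def s_def)
  qed
  thus False using empty by simp
qed

lemma nat_ceil_le: "t \<ge> 0 \<Longrightarrow> real (nat \<lceil>t\<rceil>) \<le> t + 1"
  by (simp add: of_nat_nat)

lemma num4:
  fixes Y theta eta B M :: real and k N :: nat
  assumes B_def: "B = real k * Y powr theta + 1"
      and N_def: "N = nat \<lceil>B ^ k\<rceil>"
      and M_def: "M = Y / (8 * real k * B ^ (k-1))"
  assumes k: "k \<ge> 1" and th: "real k * theta \<ge> 1" and eta: "eta > 0" and Y: "Y \<ge> 1"
    and big: "(2 * (2 * real k) ^ k) powr eta * Y powr (real k * theta * eta)
       \<le> Y powr (1 - (real k - 1) * theta) / (8 * real k * (2 * real k) ^ (k-1))"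
  shows "M > 0" and "Y powr (-theta) / real k \<le> 1 / M" and "1 / M \<le> real N powr (-eta)"
    and "real N \<ge> Y"
    and "\<forall>j\<le>k. (\<Prod>i\<le>k. nat \<lceil>(if i = 0 then real N + 1 else 1) /
          (if i = j then (if i = 0 then real N + 1 else 1 / M) else (if i = 0 then Y / real k else Y powr (-theta) / real k))\<rceil>) < N + 1"
proof -
  have kp: "real k \<ge> 1" using k by simp
  have thp: "theta > 0" using th kp mult_nonneg_nonpos[of "real k" theta] by linarith
  have Yp: "Y > 0" using Y by simp
  define Yt where "Yt = Y powr theta"
  have Yt1: "Yt \<ge> 1" unfolding Yt_def using Y thp by (simp add: ge_one_powr_ge_zero)
  have kYt: "real k * Yt \<ge> 1" using kp Yt1 by (metis mult_mono' mult_1 zero_le_one order_trans)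
  have B1: "B \<ge> real k * Yt" "B \<ge> 1" unfolding B_def Yt_def using kYt Yt_def by auto
  have B2: "B \<le> 2 * real k * Yt" unfolding B_def Yt_def using kYt Yt_def by simp
  have Bpos: "B > 0" using B1 by simp
  have Bk1: "B ^ k \<ge> 1" using B1 by simp
  have NB: "real N \<ge> B ^ k" unfolding N_def by (rule real_nat_ceiling_ge)
  have "real N \<le> B ^ k + 1" unfolding N_def by (rule nat_ceil_le) (use Bk1 in simp)
  hence NB2: "real N \<le> 2 * B ^ k" using Bk1 by linarith
  have Ytk: "Yt ^ k = Y powr (theta * real k)" unfolding Yt_def by (rule powr_pow[OF Yp])
  have "Yt ^ k \<le> B ^ k"
  proof -
    have "Yt \<le> real k * Yt" using kp Yt1 by simp
    hence "Yt \<le> B" using B1 by linarith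
    thus ?thesis using Yt1 by (intro power_mono) auto
  qed
  moreover have "Y \<le> Yt ^ k"
  proof -
    have "Y = Y powr 1" using Yp by simp
    also have "\<dots> \<le> Y powr (theta * real k)" using th Y by (intro powr_mono) (auto simp: mult.commute)
    finally show ?thesis using Ytk by simp
  qed
  ultimately show NY: "real N \<ge> Y" using NB by simp
  show Mpos: "M > 0" unfolding M_def using Yp Bpos kp by simp
  have "Y * Y powr (-theta) = Y powr (1 - theta)"
    using Yp by (simp add: powr_diff powr_minus divide_inverse)
  also have "\<dots> \<le> Y powr (theta * real (k-1))"
    using th Y k by (intro powr_mono) (auto simp: of_nat_diff algebra_simps)
  also have "\<dots> = Yt ^ (k-1)" unfolding Yt_def by (rule powr_pow[OF Yp, symmetric])
  also have "\<dots> \<le> B ^ (k-1)"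
  proof -
    have "Yt \<le> real k * Yt" using kp Yt1 by simp
    hence "Yt \<le> B" using B1 by linarith
    thus ?thesis using Yt1 by (intro power_mono) auto
  qed
  also have "\<dots> \<le> 8 * real k * real k * B ^ (k-1)"
  proof -
    have "1 \<le> real k * real k" using kp by (metis mult_mono' mult_1 zero_le_one order_trans)
    hence "1 \<le> 8 * real k * real k" by linarith
    hence "1 * B ^ (k-1) \<le> (8 * real k * real k) * B ^ (k-1)" using Bpos by (intro mult_right_mono) auto
    thus ?thesis by simp
  qed
  finally have bb: "Y * Y powr (-theta) \<le> 8 * real k * real k * B ^ (k-1)" .
  show "Y powr (-theta) / real k \<le> 1 / M"
    unfolding M_def using bb Yp kp Bpos by (simp add: field_simps)
  have Npos: "real N > 0" using NY Yp by simp
  have "real N powr eta \<le> (2 * B ^ k) powr eta" using NB2 eta Npos by (intro powr_mono2) auto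
  also have "\<dots> \<le> (2 * (2 * real k * Yt) ^ k) powr eta"
    using B2 Bpos eta by (intro powr_mono2 mult_left_mono power_mono) auto
  also have "(2 * (2 * real k * Yt) ^ k) = (2 * (2 * real k) ^ k) * Yt ^ k"
    by (simp add: power_mult_distrib)
  also have "((2 * (2 * real k) ^ k) * Yt ^ k) powr eta = (2 * (2 * real k) ^ k) powr eta * Y powr (real k * theta * eta)"
    using Ytk Yp by (simp add: powr_mult powr_powr algebra_simps)
  also have "\<dots> \<le> Y powr (1 - (real k - 1) * theta) / (8 * real k * (2 * real k) ^ (k-1))" by (rule big)
  also have "\<dots> = Y / (8 * real k * ((2 * real k) ^ (k-1) * Yt ^ (k-1)))"
  proof -
    have "Yt ^ (k-1) = Y powr (theta * real (k-1))" unfolding Yt_def by (rule powr_pow[OF Yp])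
    also have "real (k-1) = real k - 1" using k by simp
    finally have "Yt ^ (k-1) = Y powr ((real k - 1) * theta)" by (simp add: mult.commute)
    moreover have "Y powr (1 - (real k - 1) * theta) = Y / Y powr ((real k - 1) * theta)"
      using Yp by (simp add: powr_diff)
    ultimately show ?thesis by simp
  qed
  also have "\<dots> = Y / (8 * real k * (2 * real k * Yt) ^ (k-1))" by (simp add: power_mult_distrib)
  also have "\<dots> \<le> M" unfolding M_def
    using B2 Bpos Yp kp Yt1 by (intro divide_left_mono mult_left_mono power_mono mult_pos_pos) auto
  finally have NM: "real N powr eta \<le> M" .
  show "1 / M \<le> real N powr (-eta)"
    using NM Mpos Npos by (simp add: powr_minus divide_simps)
  have M1: "M \<ge> 1"
  proof -
    have "real N \<ge> 1" using NY Y by simp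
    hence "real N powr eta \<ge> 1" using eta by (simp add: ge_one_powr_ge_zero)
    thus ?thesis using NM by simp
  qed
  define b where "b = Y powr (-theta) / real k"
  have binv: "1 / b = real k * Yt" unfolding b_def Yt_def using Yp kp by (simp add: powr_minus divide_inverse)
  have bpos: "b > 0" unfolding b_def using Yp kp by simp
  have cb: "real (nat \<lceil>1 / b\<rceil>) \<le> B" using nat_ceil_le[of "1/b"] bpos unfolding binv B_def Yt_def by simp
  show "\<forall>j\<le>k. (\<Prod>i\<le>k. nat \<lceil>(if i = 0 then real N + 1 else 1) /
          (if i = j then (if i = 0 then real N + 1 else 1 / M) else (if i = 0 then Y / real k else Y powr (-theta) / real k))\<rceil>) < N + 1"
  proof (intro allI impI)
    fix j assume j: "j \<le> k"
    let ?g = "\<lambda>i. nat \<lceil>(if i = 0 then real N + 1 else 1) /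
          (if i = j then (if i = 0 then real N + 1 else 1 / M) else (if i = 0 then Y / real k else Y powr (-theta) / real k))\<rceil>"
    have "real (\<Prod>i\<le>k. ?g i) < real (N + 1)"
    proof (cases "j = 0")
      case True
      have g0: "?g 0 = 1" using True Npos by simp
      have gi: "?g i = nat \<lceil>1 / b\<rceil>" if "i \<in> {1..k}" for i using that True unfolding b_def by auto
      have "real (\<Prod>i\<le>k. ?g i) = real (?g 0) * (\<Prod>i\<in>{1..k}. real (?g i))"
        by (simp add: prod_if0[of "\<lambda>i. real (?g i)"] del: of_nat_mult)
      also have "\<dots> = (\<Prod>i\<in>{1..k}. real (nat \<lceil>1 / b\<rceil>))" using g0 gi by simp
      also have "\<dots> = real (nat \<lceil>1 / b\<rceil>) ^ k" by simp
      also have "\<dots> \<le> B ^ k" using cb by (intro power_mono) auto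
      also have "\<dots> \<le> real N" by (rule NB)
      finally show ?thesis by simp
    next
      case False
      have g0: "real (?g 0) \<le> 2 * (real N + 1) * real k / Y"
      proof -
        define t where "t = (real N + 1) * real k / Y"
        have e: "?g 0 = nat \<lceil>t\<rceil>" unfolding t_def using False by simp
        have t0: "0 \<le> t" unfolding t_def using Yp by simp
        have "Y \<le> (real N + 1) * real k"
        proof -
          have "Y \<le> (real N + 1) * 1" using NY by simp
          also have "\<dots> \<le> (real N + 1) * real k" using kp by (intro mult_left_mono) auto
          finally show ?thesis .
        qed
        hence t1: "1 \<le> t" unfolding t_def using Yp by simp
        have "real (?g 0) \<le> t + 1" unfolding e by (rule nat_ceil_le[OF t0])
        also have "\<dots> \<le> 2 * t" using t1 by simp
        also have "2 * t = 2 * (real N + 1) * real k / Y" unfolding t_def by simp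
        finally show ?thesis .
      qed
      have gj: "real (?g j) \<le> 2 * M"
      proof -
        have e: "?g j = nat \<lceil>M\<rceil>" using False by simp
        have "real (?g j) \<le> M + 1" unfolding e by (rule nat_ceil_le) (use Mpos in simp)
        thus ?thesis using M1 by linarith
      qed
      have gi: "?g i = nat \<lceil>1 / b\<rceil>" if "i \<in> {1..k}-{j}" for i using that unfolding b_def by auto
      have "real (\<Prod>i\<le>k. ?g i) = real (?g 0) * (\<Prod>i\<in>{1..k}. real (?g i))"
        by (simp add: prod_if0[of "\<lambda>i. real (?g i)"] del: of_nat_mult)
      also have "(\<Prod>i\<in>{1..k}. real (?g i)) = real (?g j) * (\<Prod>i\<in>{1..k}-{j}. real (?g i))"
        using j False by (subst prod.remove[of _ j]) auto
      also have "(\<Prod>i\<in>{1..k}-{j}. real (?g i)) = real (nat \<lceil>1 / b\<rceil>) ^ (k-1)"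
      proof -
        have "card ({1..k}-{j}) = k - 1" using j False by (simp add: card_Diff_singleton)
        thus ?thesis using gi by (simp add: prod.cong[of _ _ _ "\<lambda>_. real (nat \<lceil>1 / b\<rceil>)"])
      qed
      finally have P: "real (\<Prod>i\<le>k. ?g i) = real (?g 0) * (real (?g j) * real (nat \<lceil>1 / b\<rceil>) ^ (k-1))" .
      have G: "real (nat \<lceil>1 / b\<rceil>) ^ (k-1) \<le> B ^ (k-1)" using cb by (intro power_mono) auto
      have GJ: "real (?g j) * real (nat \<lceil>1 / b\<rceil>) ^ (k-1) \<le> (2 * M) * B ^ (k-1)"
        by (rule mult_mono[OF gj G]) (use Mpos in auto)
      have "real (?g 0) * (real (?g j) * real (nat \<lceil>1 / b\<rceil>) ^ (k-1))
          \<le> (2 * (real N + 1) * real k / Y) * ((2 * M) * B ^ (k-1))"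
        by (rule mult_mono[OF g0 GJ]) (use Yp in auto)
      also have "(2 * (real N + 1) * real k / Y) * ((2 * M) * B ^ (k-1)) = (real N + 1) / 2"
        unfolding M_def using Yp kp Bpos by (simp add: field_simps)
      finally show ?thesis unfolding P by simp
    qed
    thus "(\<Prod>i\<le>k. ?g i) < N + 1" by (simp only: of_nat_less_iff)
  qed
qed

lemma F4:
  fixes zeta :: "nat \<Rightarrow> real"
  assumes k: "k \<ge> 1" and Hn: "\<forall>th > 1 / real k. \<forall>X0. \<exists>Y\<ge>X0. \<not> has_indep_sols k 1 zeta th Y"
    and eta: "0 < eta" "eta < 1 / real k"
  shows "\<forall>X0. \<exists>X\<ge>X0. has_indep_sols k (k+1) zeta eta X"
proof
  fix X0 :: real
  have kp: "real k \<ge> 1" using k by simp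
  define den where "den = real k - 1 + real k * eta"
  have keta: "real k * eta < 1" using eta kp by (simp add: field_simps)
  have denp: "den > 0" unfolding den_def using kp eta by (smt (verit) mult_pos_pos)
  have denk: "den < real k" unfolding den_def using keta by simp
  define th where "th = (1 / real k + 1 / den) / 2"
  have ineq: "1 / real k < 1 / den" using denp denk by (simp add: frac_less2)
  have th1: "th > 1 / real k" unfolding th_def using ineq by simp
  have th2: "th < 1 / den" unfolding th_def using ineq by simp
  have thp: "th > 0" using th1 kp by (smt (verit) divide_pos_pos of_nat_0_less_iff)
  have kth: "real k * th \<ge> 1" using th1 kp by (simp add: field_simps)
  have "th * den < 1" using th2 denp by (simp add: field_simps)
  hence gam: "1 - (real k - 1) * th - real k * th * eta > 0" unfolding den_def by (simp add: algebra_simps)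
  define gamma where "gamma = 1 - (real k - 1) * th - real k * th * eta"
  define C1 where "C1 = (2 * (2 * real k) ^ k) powr eta"
  define C2 where "C2 = 8 * real k * (2 * real k) ^ (k-1)"
  have C2p: "C2 > 0" unfolding C2_def using kp by simp
  obtain Y1 where Y1: "Y1 \<ge> 1" "\<forall>Y\<ge>Y1. Y powr gamma \<ge> C1 * C2"
    using powr_ev_large[of gamma "C1 * C2"] gam unfolding gamma_def by auto
  obtain Y where Y: "Y \<ge> max X0 Y1" "\<not> has_indep_sols k 1 zeta th Y" using Hn th1 by blast
  have Y1': "Y \<ge> 1" using Y Y1 by simp
  have Yp: "Y > 0" using Y1' by simp
  have big: "(2 * (2 * real k) ^ k) powr eta * Y powr (real k * th * eta)
       \<le> Y powr (1 - (real k - 1) * th) / (8 * real k * (2 * real k) ^ (k-1))"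
  proof -
    have "Y powr (1 - (real k - 1) * th) = Y powr (real k * th * eta) * Y powr gamma"
      unfolding gamma_def by (subst powr_add[symmetric]) simp
    moreover have "Y powr gamma \<ge> C1 * C2" using Y1 Y by simp
    ultimately have "Y powr (1 - (real k - 1) * th) \<ge> Y powr (real k * th * eta) * (C1 * C2)"
      by (simp add: mult_left_mono)
    thus ?thesis using C2p unfolding C1_def C2_def[symmetric] by (simp add: field_simps)
  qed
  define B where "B = real k * Y powr th + 1"
  define N where "N = nat \<lceil>B ^ k\<rceil>"
  define M where "M = Y / (8 * real k * B ^ (k-1))"
  note nm = num4[OF B_def N_def M_def k kth eta(1) Y1' big]
  have "has_indep_sols k (k+1) zeta eta (real N)"
  proof (rule PHL[OF k _ _ nm(1) nm(2) nm(3) _ _ nm(5) Y(2)])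
    show "Y / real k > 0" using Yp kp by simp
    show "Y powr (-th) / real k > 0" using kp Yp by simp
    show "real k * (Y / real k) \<le> Y" using kp by simp
    show "real k * (Y powr (-th) / real k) \<le> Y powr (-th)" using kp by simp
  qed
  moreover have "real N \<ge> X0" using nm(4) Y by simp
  ultimately show "\<exists>X\<ge>X0. has_indep_sols k (k+1) zeta eta X" by blast
qed

lemma ereal_ge_from_below:
  assumes c: "c > 0" and H: "\<And>r. 0 < r \<Longrightarrow> r < c \<Longrightarrow> ereal r \<le> z"
  shows "ereal c \<le> z"
proof (rule dense_le_bounded[of "ereal 0"])
  show "ereal 0 < ereal c" using c by simp
next
  fix w assume w: "ereal 0 < w" "w < ereal c"
  then obtain r where r: "w = ereal r" by (cases w) auto
  thus "w \<le> z" using w H by simp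
qed

theorem lemma9:
  fixes k :: nat and zeta :: "nat \<Rightarrow> real"
  assumes "k \<ge> 1"
  shows "hat_lambda_exp k 1 zeta = ereal (1 / real k) \<longleftrightarrow>
           ((\<forall>j\<in>{2..k}. lambda_exp k j zeta \<ge> lambda_exp k (j + 1) zeta) \<and>
            lambda_exp k (k + 1) zeta = ereal (1 / real k))"
proof -
  have k: "k \<ge> 1" by fact
  have kp: "1 / real k > 0" using k by simp
  have hat_ge: "hat_lambda_exp k 1 zeta \<ge> ereal (1 / real k)"
    unfolding hat_lambda_exp_def
  proof (rule ereal_ge_from_below[OF kp])
    fix r :: real assume "0 < r" "r < 1 / real k"
    hence "\<exists>X0. \<forall>X\<ge>X0. has_indep_sols k 1 zeta r X" using dirichlet[OF k] by blast
    thus "ereal r \<le> Sup {ereal eta |eta. \<exists>X0. \<forall>X\<ge>X0. has_indep_sols k 1 zeta eta X}"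
      by (intro Sup_upper) blast
  qed
  have lam_le: "lambda_exp k (k+1) zeta \<le> ereal (1 / real k)"
    unfolding lambda_exp_def
  proof (rule Sup_least)
    fix x assume "x \<in> {ereal eta |eta. \<forall>X0. \<exists>X\<ge>X0. has_indep_sols k (k+1) zeta eta X}"
    then obtain eta where x: "x = ereal eta" "\<forall>X0. \<exists>X\<ge>X0. has_indep_sols k (k+1) zeta eta X" by blast
    have "eta \<le> 1 / real k" using F1[OF k _ x(2)] by force
    thus "x \<le> ereal (1 / real k)" using x by simp
  qed
  have chain: "\<forall>j\<in>{2..k}. lambda_exp k j zeta \<ge> lambda_exp k (j + 1) zeta"
  proof
    fix j assume "j \<in> {2..k}"
    show "lambda_exp k j zeta \<ge> lambda_exp k (j + 1) zeta"
      unfolding lambda_exp_def using indep_mono by (intro Sup_subset_mono) blast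
  qed
  show ?thesis
  proof
    assume H: "hat_lambda_exp k 1 zeta = ereal (1 / real k)"
    have Hn: "\<forall>th > 1 / real k. \<forall>X0. \<exists>Y\<ge>X0. \<not> has_indep_sols k 1 zeta th Y"
    proof (intro allI impI)
      fix th X0 :: real assume th: "th > 1 / real k"
      show "\<exists>Y\<ge>X0. \<not> has_indep_sols k 1 zeta th Y"
      proof (rule ccontr)
        assume "\<not> ?thesis"
        hence "\<exists>X0. \<forall>X\<ge>X0. has_indep_sols k 1 zeta th X" by (metis not_le less_le)
        hence "ereal th \<le> hat_lambda_exp k 1 zeta" unfolding hat_lambda_exp_def by (intro Sup_upper) blast
        thus False using H th by simp
      qed
    qed
    have "lambda_exp k (k+1) zeta \<ge> ereal (1 / real k)"
      unfolding lambda_exp_def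
    proof (rule ereal_ge_from_below[OF kp])
      fix r :: real assume "0 < r" "r < 1 / real k"
      hence "\<forall>X0. \<exists>X\<ge>X0. has_indep_sols k (k+1) zeta r X" using F4[OF k Hn] by blast
      thus "ereal r \<le> Sup {ereal eta |eta. \<forall>X0. \<exists>X\<ge>X0. has_indep_sols k (k+1) zeta eta X}"
        by (intro Sup_upper) blast
    qed
    thus "(\<forall>j\<in>{2..k}. lambda_exp k j zeta \<ge> lambda_exp k (j + 1) zeta) \<and>
            lambda_exp k (k + 1) zeta = ereal (1 / real k)" using lam_le chain by simp
  next
    assume H: "(\<forall>j\<in>{2..k}. lambda_exp k j zeta \<ge> lambda_exp k (j + 1) zeta) \<and>
            lambda_exp k (k + 1) zeta = ereal (1 / real k)"
    have "\<not> hat_lambda_exp k 1 zeta > ereal (1 / real k)"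
    proof
      assume "hat_lambda_exp k 1 zeta > ereal (1 / real k)"
      then obtain x where x: "x \<in> {ereal eta |eta. \<exists>X0. \<forall>X\<ge>X0. has_indep_sols k 1 zeta eta X}" "ereal (1 / real k) < x"
        unfolding hat_lambda_exp_def less_Sup_iff by blast
      from x(1) obtain th where th0: "x = ereal th" "\<exists>X0. \<forall>X\<ge>X0. has_indep_sols k 1 zeta th X" by blast
      have th: "th > 1 / real k" "\<exists>X0. \<forall>X\<ge>X0. has_indep_sols k 1 zeta th X" using th0 x(2) by auto
      then obtain Y0 where Y0: "\<forall>Y\<ge>Y0. has_indep_sols k 1 zeta th Y" by blast
      obtain c where c: "c < 1 / real k" "\<forall>eta. (\<forall>X0. \<exists>X\<ge>X0. has_indep_sols k (k+1) zeta eta X) \<longrightarrow> eta \<le> c"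
        using F3[OF k th(1) Y0] by blast
      have "lambda_exp k (k+1) zeta \<le> ereal c"
        unfolding lambda_exp_def
      proof (rule Sup_least)
        fix x assume "x \<in> {ereal eta |eta. \<forall>X0. \<exists>X\<ge>X0. has_indep_sols k (k+1) zeta eta X}"
        then obtain eta where x: "x = ereal eta" "\<forall>X0. \<exists>X\<ge>X0. has_indep_sols k (k+1) zeta eta X" by blast
        thus "x \<le> ereal c" using c(2) by simp
      qed
      thus False using H c(1) by simp
    qed
    thus "hat_lambda_exp k 1 zeta = ereal (1 / real k)" using hat_ge by simp
  qed
qed

end
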